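(* Let $\Gamma$ be a set of axioms. Then $\mathsf{ICK}\oplus\Gamma$ is sound and complete with respect to the class of general frames that validate $\Gamma$.
   Context: Formulas are generated by $\phi ::= p\mid\bot\mid\phi\wedge\phi\mid\phi\vee\phi\mid\phi\to\phi\mid\phi\mathrel{\Box\!\!\!\rightarrow}\phi$. $\mathsf{ICK}\oplus\Gamma$ is the smallest set of formulas containing intuitionistic propositional logic, $\Gamma$, $(p\mathrel{\Box\!\!\!\rightarrow}(q\wedge r))\leftrightarrow((p\mathrel{\Box\!\!\!\rightarrow} q)\wedge(p\mathrel{\Box\!\!\!\rightarrow} r))$ and $(p\mathrel{\Box\!\!\!\rightarrow}\top)\leftrightarrow\top$, closed under uniform substitution, modus ponens, and the congruence rules for both arguments of $\mathrel{\Box\!\!\!\rightarrow}$. A general frame is $(X,\leq,\mathcal{R},A)$ with $(X,\leq)$ a poset, $A$ a collection of upsets containing $X,\emptyset$ and closed under $\cap,\cup$, $a\to b=\{x\mid{\uparrow}x\cap a\subseteq b\}$ and $a\Rightarrow_c b=\{x\mid R_a[x]\subseteq b\}$, and $\mathcal{R}=\{R_a\mid a\in A\}$ relations with $(\leq\circ R_a)\subseteq(R_a\circ\leq)$. Validity is with respect to valuations into $A$, with $x\models\phi\mathrel{\Box\!\!\!\rightarrow}\psi$ iff every $y$ with $xR_{V(\phi)}y$ satisfies $\psi$. *)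

theory Defs
  imports Main
begin

datatype fm = Var nat | Bot | And fm fm | Or fm fm | Imp fm fm | Cond fm fm

definition Top :: fm where "Top = Imp Bot Bot"
definition Iff :: "fm \<Rightarrow> fm \<Rightarrow> fm" where "Iff a b = And (Imp a b) (Imp b a)"

fun subst :: "(nat \<Rightarrow> fm) \<Rightarrow> fm \<Rightarrow> fm" where
  "subst s (Var n) = s n"
| "subst s Bot = Bot"
| "subst s (And a b) = And (subst s a) (subst s b)"
| "subst s (Or a b) = Or (subst s a) (subst s b)"
| "subst s (Imp a b) = Imp (subst s a) (subst s b)"
| "subst s (Cond a b) = Cond (subst s a) (subst s b)"

text \<open>Standard Hilbert-style axioms of intuitionistic propositional logic
  (in the variables p = Var 0, q = Var 1, r = Var 2); together with uniform
  substitution and modus ponens they generate IPC in the extended language.\<close>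

definition ipc_axioms :: "fm set" where
  "ipc_axioms = (let p = Var 0; q = Var 1; r = Var 2 in
    { Imp p (Imp q p),
      Imp (Imp p (Imp q r)) (Imp (Imp p q) (Imp p r)),
      Imp (And p q) p,
      Imp (And p q) q,
      Imp p (Imp q (And p q)),
      Imp p (Or p q),
      Imp q (Or p q),
      Imp (Imp p r) (Imp (Imp q r) (Imp (Or p q) r)),
      Imp Bot p })"

definition ick_axioms :: "fm set" where
  "ick_axioms = (let p = Var 0; q = Var 1; r = Var 2 in
    { Iff (Cond p (And q r)) (And (Cond p q) (Cond p r)),
      Iff (Cond p Top) Top })"

inductive_set ICK :: "fm set \<Rightarrow> fm set" for \<Gamma> :: "fm set" where
  ipc: "\<phi> \<in> ipc_axioms \<Longrightarrow> \<phi> \<in> ICK \<Gamma>"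
| gamma: "\<phi> \<in> \<Gamma> \<Longrightarrow> \<phi> \<in> ICK \<Gamma>"
| ick: "\<phi> \<in> ick_axioms \<Longrightarrow> \<phi> \<in> ICK \<Gamma>"
| us: "\<phi> \<in> ICK \<Gamma> \<Longrightarrow> subst s \<phi> \<in> ICK \<Gamma>"
| mp: "\<phi> \<in> ICK \<Gamma> \<Longrightarrow> Imp \<phi> \<psi> \<in> ICK \<Gamma> \<Longrightarrow> \<psi> \<in> ICK \<Gamma>"
| cong_left: "Iff \<phi> \<psi> \<in> ICK \<Gamma> \<Longrightarrow> Iff (Cond \<phi> \<chi>) (Cond \<psi> \<chi>) \<in> ICK \<Gamma>"
| cong_right: "Iff \<phi> \<psi> \<in> ICK \<Gamma> \<Longrightarrow> Iff (Cond \<chi> \<phi>) (Cond \<chi> \<psi>) \<in> ICK \<Gamma>"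

text \<open>A general frame (X, le, R, A): R a is the relation R_a (relevant for a in A).\<close>

definition upset :: "'w set \<Rightarrow> ('w \<Rightarrow> 'w \<Rightarrow> bool) \<Rightarrow> 'w set \<Rightarrow> bool" where
  "upset X le a \<longleftrightarrow> a \<subseteq> X \<and> (\<forall>x\<in>a. \<forall>y\<in>X. le x y \<longrightarrow> y \<in> a)"

definition impl :: "'w set \<Rightarrow> ('w \<Rightarrow> 'w \<Rightarrow> bool) \<Rightarrow> 'w set \<Rightarrow> 'w set \<Rightarrow> 'w set" where
  "impl X le a b = {x \<in> X. \<forall>y\<in>X. le x y \<and> y \<in> a \<longrightarrow> y \<in> b}"

definition cimpl :: "'w set \<Rightarrow> ('w set \<Rightarrow> 'w \<Rightarrow> 'w \<Rightarrow> bool) \<Rightarrow> 'w set \<Rightarrow> 'w set \<Rightarrow> 'w set" where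
  "cimpl X R a b = {x \<in> X. \<forall>y. R a x y \<longrightarrow> y \<in> b}"

definition general_frame ::
  "'w set \<Rightarrow> ('w \<Rightarrow> 'w \<Rightarrow> bool) \<Rightarrow> ('w set \<Rightarrow> 'w \<Rightarrow> 'w \<Rightarrow> bool) \<Rightarrow> 'w set set \<Rightarrow> bool" where
  "general_frame X le R A \<longleftrightarrow>
     (\<forall>x\<in>X. le x x) \<and>
     (\<forall>x\<in>X. \<forall>y\<in>X. le x y \<and> le y x \<longrightarrow> x = y) \<and>
     (\<forall>x\<in>X. \<forall>y\<in>X. \<forall>z\<in>X. le x y \<and> le y z \<longrightarrow> le x z) \<and>
     (\<forall>a\<in>A. upset X le a) \<and> X \<in> A \<and> {} \<in> A \<and>
     (\<forall>a\<in>A. \<forall>b\<in>A. a \<inter> b \<in> A \<and> a \<union> b \<in> A \<and> impl X le a b \<in> A \<and> cimpl X R a b \<in> A) \<and>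
     (\<forall>a\<in>A. \<forall>x y. R a x y \<longrightarrow> x \<in> X \<and> y \<in> X) \<and>
     (\<forall>a\<in>A. \<forall>x\<in>X. \<forall>y\<in>X. \<forall>z\<in>X. le x y \<and> R a y z \<longrightarrow> (\<exists>w\<in>X. R a x w \<and> le w z))"

fun tset :: "'w set \<Rightarrow> ('w \<Rightarrow> 'w \<Rightarrow> bool) \<Rightarrow> ('w set \<Rightarrow> 'w \<Rightarrow> 'w \<Rightarrow> bool)
    \<Rightarrow> (nat \<Rightarrow> 'w set) \<Rightarrow> fm \<Rightarrow> 'w set" where
  "tset X le R V (Var n) = V n"
| "tset X le R V Bot = {}"
| "tset X le R V (And a b) = tset X le R V a \<inter> tset X le R V b"
| "tset X le R V (Or a b) = tset X le R V a \<union> tset X le R V b"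
| "tset X le R V (Imp a b) = impl X le (tset X le R V a) (tset X le R V b)"
| "tset X le R V (Cond a b) = cimpl X R (tset X le R V a) (tset X le R V b)"

definition valid_in ::
  "'w set \<Rightarrow> ('w \<Rightarrow> 'w \<Rightarrow> bool) \<Rightarrow> ('w set \<Rightarrow> 'w \<Rightarrow> 'w \<Rightarrow> bool) \<Rightarrow> 'w set set \<Rightarrow> fm \<Rightarrow> bool" where
  "valid_in X le R A \<phi> \<longleftrightarrow> (\<forall>V. (\<forall>n. V n \<in> A) \<longrightarrow> tset X le R V \<phi> = X)"

end

theory Submission
  imports Defs
begin


abbreviation sb :: "fm \<Rightarrow> fm \<Rightarrow> fm \<Rightarrow> nat \<Rightarrow> fm" where
  "sb a b c \<equiv> (\<lambda>n. if n = 0 then a else if n = 1 then b else c)"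

lemma ax: "\<phi> \<in> ipc_axioms \<Longrightarrow> subst (sb a b c) \<phi> \<in> ICK \<Gamma>"
  by (rule ICK.us, rule ICK.ipc)

lemma axK: "Imp a (Imp b a) \<in> ICK \<Gamma>"
  using ax[of "Imp (Var 0) (Imp (Var 1) (Var 0))" a b a \<Gamma>] by (simp add: ipc_axioms_def Let_def)
lemma axS: "Imp (Imp a (Imp b c)) (Imp (Imp a b) (Imp a c)) \<in> ICK \<Gamma>"
  using ax[of "Imp (Imp (Var 0) (Imp (Var 1) (Var 2))) (Imp (Imp (Var 0) (Var 1)) (Imp (Var 0) (Var 2)))" a b c \<Gamma>]
  by (simp add: ipc_axioms_def Let_def)
lemma axA1: "Imp (And a b) a \<in> ICK \<Gamma>"
  using ax[of "Imp (And (Var 0) (Var 1)) (Var 0)" a b a \<Gamma>] by (simp add: ipc_axioms_def Let_def)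
lemma axA2: "Imp (And a b) b \<in> ICK \<Gamma>"
  using ax[of "Imp (And (Var 0) (Var 1)) (Var 1)" a b a \<Gamma>] by (simp add: ipc_axioms_def Let_def)
lemma axAI: "Imp a (Imp b (And a b)) \<in> ICK \<Gamma>"
  using ax[of "Imp (Var 0) (Imp (Var 1) (And (Var 0) (Var 1)))" a b a \<Gamma>] by (simp add: ipc_axioms_def Let_def)
lemma axO1: "Imp a (Or a b) \<in> ICK \<Gamma>"
  using ax[of "Imp (Var 0) (Or (Var 0) (Var 1))" a b a \<Gamma>] by (simp add: ipc_axioms_def Let_def)
lemma axO2: "Imp b (Or a b) \<in> ICK \<Gamma>"
  using ax[of "Imp (Var 1) (Or (Var 0) (Var 1))" a b a \<Gamma>] by (simp add: ipc_axioms_def Let_def)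
lemma axOE: "Imp (Imp a c) (Imp (Imp b c) (Imp (Or a b) c)) \<in> ICK \<Gamma>"
  using ax[of "Imp (Imp (Var 0) (Var 2)) (Imp (Imp (Var 1) (Var 2)) (Imp (Or (Var 0) (Var 1)) (Var 2)))" a b c \<Gamma>]
  by (simp add: ipc_axioms_def Let_def)
lemma axB: "Imp Bot a \<in> ICK \<Gamma>"
  using ax[of "Imp Bot (Var 0)" a b a \<Gamma>] by (simp add: ipc_axioms_def Let_def)

lemma axC1: "Iff (Cond a (And b c)) (And (Cond a b) (Cond a c)) \<in> ICK \<Gamma>"
  using ICK.us[OF ICK.ick, where \<phi>="Iff (Cond (Var 0) (And (Var 1) (Var 2))) (And (Cond (Var 0) (Var 1)) (Cond (Var 0) (Var 2)))" and \<Gamma>=\<Gamma> and s="sb a b c"]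
  by (simp add: ick_axioms_def Let_def Iff_def)
lemma axC2: "Iff (Cond a Top) Top \<in> ICK \<Gamma>"
  using ICK.us[OF ICK.ick, where \<phi>="Iff (Cond (Var 0) Top) Top" and \<Gamma>=\<Gamma> and s="sb a a a"]
  by (simp add: ick_axioms_def Let_def Iff_def Top_def)

inductive der :: "fm set \<Rightarrow> fm set \<Rightarrow> fm \<Rightarrow> bool" for \<Gamma> H where
  dthm: "\<phi> \<in> ICK \<Gamma> \<Longrightarrow> der \<Gamma> H \<phi>"
| dhyp: "\<phi> \<in> H \<Longrightarrow> der \<Gamma> H \<phi>"
| dmp: "der \<Gamma> H \<phi> \<Longrightarrow> der \<Gamma> H (Imp \<phi> \<psi>) \<Longrightarrow> der \<Gamma> H \<psi>"

lemma axI: "Imp a a \<in> ICK \<Gamma>"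
  by (meson ICK.mp axK axS)

lemma deduction: "der \<Gamma> (insert a H) b \<Longrightarrow> der \<Gamma> H (Imp a b)"
proof (induction rule: der.induct)
  case (dthm \<phi>) then show ?case by (meson ICK.mp axK der.dthm)
next
  case (dhyp \<phi>) then show ?case by (metis axI axK der.dhyp der.dmp der.dthm insert_iff)
next
  case (dmp \<phi> \<psi>) then show ?case by (meson axS der.dmp der.dthm)
qed

lemma der_empty: "der \<Gamma> {} \<phi> \<Longrightarrow> \<phi> \<in> ICK \<Gamma>"
  by (induction rule: der.induct) (auto intro: ICK.mp)

lemma der_mono: "der \<Gamma> H \<phi> \<Longrightarrow> H \<subseteq> H' \<Longrightarrow> der \<Gamma> H' \<phi>"
  by (induction rule: der.induct) (auto intro: der.intros)

lemma der_compact: "der \<Gamma> H \<phi> \<Longrightarrow> \<exists>H'. finite H' \<and> H' \<subseteq> H \<and> der \<Gamma> H' \<phi>"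
proof (induction rule: der.induct)
  case (dthm \<phi>) then show ?case by (auto intro: der.intros)
next
  case (dhyp \<phi>) then show ?case by (intro exI[of _ "{\<phi>}"]) (auto intro: der.intros)
next
  case (dmp \<phi> \<psi>)
  then obtain H1 H2 where "finite H1" "H1 \<subseteq> H" "der \<Gamma> H1 \<phi>" "finite H2" "H2 \<subseteq> H" "der \<Gamma> H2 (Imp \<phi> \<psi>)" by blast
  then show ?case by (intro exI[of _ "H1 \<union> H2"]) (auto intro: der.dmp der_mono)
qed

lemma derI: "der \<Gamma> {a} b \<Longrightarrow> Imp a b \<in> ICK \<Gamma>"
  using deduction der_empty by blast

lemma dmp2: "Imp a b \<in> ICK \<Gamma> \<Longrightarrow> der \<Gamma> H a \<Longrightarrow> der \<Gamma> H b"
  by (meson der.dmp der.dthm)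

lemma Iff_D1: "Iff a b \<in> ICK \<Gamma> \<Longrightarrow> Imp a b \<in> ICK \<Gamma>"
  unfolding Iff_def using ICK.mp axA1 by blast
lemma Iff_D2: "Iff a b \<in> ICK \<Gamma> \<Longrightarrow> Imp b a \<in> ICK \<Gamma>"
  unfolding Iff_def using ICK.mp axA2 by blast
lemma Iff_I: "Imp a b \<in> ICK \<Gamma> \<Longrightarrow> Imp b a \<in> ICK \<Gamma> \<Longrightarrow> Iff a b \<in> ICK \<Gamma>"
  unfolding Iff_def using ICK.mp axAI by blast

lemma imp_trans: "Imp a b \<in> ICK \<Gamma> \<Longrightarrow> Imp b c \<in> ICK \<Gamma> \<Longrightarrow> Imp a c \<in> ICK \<Gamma>"
  apply (rule derI) by (meson dmp2 der.dhyp singletonI)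

lemma cond_mono: "Imp a b \<in> ICK \<Gamma> \<Longrightarrow> Imp (Cond c a) (Cond c b) \<in> ICK \<Gamma>"
proof -
  assume h: "Imp a b \<in> ICK \<Gamma>"
  have "Imp a (And a b) \<in> ICK \<Gamma>"
    apply (rule derI) by (meson axAI der.dhyp dmp2 h singletonI der.dmp)
  then have "Iff a (And a b) \<in> ICK \<Gamma>" using Iff_I axA1 by blast
  then have "Iff (Cond c a) (Cond c (And a b)) \<in> ICK \<Gamma>" by (rule ICK.cong_right)
  then have 1: "Imp (Cond c a) (Cond c (And a b)) \<in> ICK \<Gamma>" by (rule Iff_D1)
  have "Imp (Cond c (And a b)) (Cond c b) \<in> ICK \<Gamma>"
    using imp_trans[OF Iff_D1[OF axC1] axA2] .
  then show ?thesis using 1 imp_trans by blast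
qed

lemma cond_nec: "b \<in> ICK \<Gamma> \<Longrightarrow> Cond a b \<in> ICK \<Gamma>"
proof -
  assume h: "b \<in> ICK \<Gamma>"
  have "Imp Top b \<in> ICK \<Gamma>" using h by (meson ICK.mp axK)
  then have "Imp (Cond a Top) (Cond a b) \<in> ICK \<Gamma>" by (rule cond_mono)
  moreover have "Top \<in> ICK \<Gamma>" unfolding Top_def by (rule axI)
  then have "Cond a Top \<in> ICK \<Gamma>" using Iff_D2[OF axC2] ICK.mp by blast
  ultimately show ?thesis using ICK.mp by blast
qed



lemma gfD:
  assumes "general_frame X le R A"
  shows "\<forall>x\<in>X. le x x" "\<forall>x\<in>X. \<forall>y\<in>X. \<forall>z\<in>X. le x y \<and> le y z \<longrightarrow> le x z"
    "\<forall>a\<in>A. upset X le a" "X \<in> A" "{} \<in> A"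
    "\<forall>a\<in>A. \<forall>b\<in>A. a \<inter> b \<in> A \<and> a \<union> b \<in> A \<and> impl X le a b \<in> A \<and> cimpl X R a b \<in> A"
    "\<forall>a\<in>A. \<forall>x y. R a x y \<longrightarrow> x \<in> X \<and> y \<in> X"
  using assms unfolding general_frame_def by blast+

lemma tset_A: "tset X le R V \<phi> \<in> A" if "general_frame X le R A" "\<forall>n. V n \<in> A"
proof (induction \<phi>)
  case (Var x) show ?case using that(2) by simp
next
  case Bot show ?case using gfD(5)[OF that(1)] by simp
next
  case (And a b) then show ?case using gfD(6)[OF that(1)] by simp
next
  case (Or a b) then show ?case using gfD(6)[OF that(1)] by simp
next
  case (Imp a b) then show ?case using gfD(6)[OF that(1)] by simp
next
  case (Cond a b) then show ?case using gfD(6)[OF that(1)] by simp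
qed

lemma tset_sub: "general_frame X le R A \<Longrightarrow> (\<forall>n. V n \<in> A) \<Longrightarrow> tset X le R V \<phi> \<subseteq> X"
  using tset_A gfD(3) unfolding upset_def by blast

lemma tset_up: "general_frame X le R A \<Longrightarrow> (\<forall>n. V n \<in> A) \<Longrightarrow> upset X le (tset X le R V \<phi>)"
  using tset_A gfD(3) by blast

lemma tset_subst: "tset X le R V (subst s \<phi>) = tset X le R (\<lambda>n. tset X le R V (s n)) \<phi>"
  by (induction \<phi>) auto

lemma impl_X: "\<forall>x\<in>X. le x x \<Longrightarrow> a \<subseteq> X \<Longrightarrow> impl X le a b = X \<longleftrightarrow> a \<subseteq> b"
  unfolding impl_def by blast

lemma impl_self: "impl X le a a = X"
  unfolding impl_def by blast

lemma valid_Iff: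
  assumes gf: "general_frame X le R A"
  shows "valid_in X le R A (Iff a b) \<longleftrightarrow> (\<forall>V. (\<forall>n. V n \<in> A) \<longrightarrow> tset X le R V a = tset X le R V b)"
proof -
  have "tset X le R V (Iff a b) = X \<longleftrightarrow> tset X le R V a = tset X le R V b" if "\<forall>n. V n \<in> A" for V
  proof -
    have s: "tset X le R V a \<subseteq> X" "tset X le R V b \<subseteq> X" using tset_sub[OF gf that] by auto
    have "tset X le R V (Iff a b) = impl X le (tset X le R V a) (tset X le R V b) \<inter> impl X le (tset X le R V b) (tset X le R V a)"
      by (simp add: Iff_def)
    moreover have "impl X le (tset X le R V a) (tset X le R V b) \<subseteq> X" "impl X le (tset X le R V b) (tset X le R V a) \<subseteq> X"
      unfolding impl_def by auto
    ultimately show ?thesis using impl_X[where X=X and le=le and a="tset X le R V a" and b="tset X le R V b"] impl_X[where X=X and le=le and b="tset X le R V a" and a="tset X le R V b"] gfD(1)[OF gf] s by blast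
  qed
  then show ?thesis unfolding valid_in_def by blast
qed

lemma upD: "upset X le a \<Longrightarrow> x \<in> a \<Longrightarrow> x \<in> X" "upset X le a \<Longrightarrow> x \<in> a \<Longrightarrow> y \<in> X \<Longrightarrow> le x y \<Longrightarrow> y \<in> a"
  unfolding upset_def by blast+

context
  fixes X :: "'w set" and le a b c
  assumes rf: "\<forall>x\<in>X. le x x" and tr: "\<forall>x\<in>X. \<forall>y\<in>X. \<forall>z\<in>X. le x y \<and> le y z \<longrightarrow> le x z"
    and ua: "upset X le a" and ub: "upset X le b" and uc: "upset X le c"
begin

lemma sK: "impl X le a (impl X le b a) = X"
  using ua unfolding impl_def upset_def by blast

lemma sS: "impl X le (impl X le a (impl X le b c)) (impl X le (impl X le a b) (impl X le a c)) = X"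
  using rf tr unfolding impl_def by blast

lemma sA1: "impl X le (a \<inter> b) a = X" unfolding impl_def by blast
lemma sA2: "impl X le (a \<inter> b) b = X" unfolding impl_def by blast
lemma sAI: "impl X le a (impl X le b (a \<inter> b)) = X"
  using ua unfolding impl_def upset_def by blast
lemma sO1: "impl X le a (a \<union> b) = X" unfolding impl_def by blast
lemma sO2: "impl X le b (a \<union> b) = X" unfolding impl_def by blast
lemma sOE: "impl X le (impl X le a c) (impl X le (impl X le b c) (impl X le (a \<union> b) c)) = X"
  using rf tr unfolding impl_def by blast
lemma sB: "impl X le {} a = X" unfolding impl_def by blast

end

lemma soundness:
  assumes "\<phi> \<in> ICK \<Gamma>" and gf: "general_frame X le R A" and G: "\<forall>\<gamma>\<in>\<Gamma>. valid_in X le R A \<gamma>"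
  shows "valid_in X le R A \<phi>"
  using assms(1)
proof (induction rule: ICK.induct)
  case (ipc \<phi>)
  show ?case unfolding valid_in_def
  proof (intro allI impI)
    fix V :: "nat \<Rightarrow> _" assume V: "\<forall>n. V n \<in> A"
    have u: "upset X le (V n)" for n using V gfD(3)[OF gf] by blast
    note facts = gfD(1,2)[OF gf] u[where n=0] u[where n=1] u[where n=2]
    show "tset X le R V \<phi> = X"
      using ipc unfolding ipc_axioms_def Let_def
      apply (elim insertE emptyE)
      apply (simp_all only: tset.simps)
      using sK[OF facts] sS[OF facts] sA1[OF facts] sA2[OF facts] sAI[OF facts] sO1[OF facts]
        sO2[OF facts] sOE[OF facts] sB[OF facts]
      by simp_all
  qed
next
  case (gamma \<phi>) then show ?case using G by blast
next
  case (ick \<phi>)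
  show ?case unfolding valid_in_def
  proof (intro allI impI)
    fix V :: "nat \<Rightarrow> _" assume V: "\<forall>n. V n \<in> A"
    have 1: "cimpl X R a (b \<inter> c) = cimpl X R a b \<inter> cimpl X R a c" for a b c
      unfolding cimpl_def by blast
    have 2: "cimpl X R (V 0) X = X" using gfD(7)[OF gf] V unfolding cimpl_def by blast
    have 3: "impl X le {} {} = X" unfolding impl_def by blast
    show "tset X le R V \<phi> = X"
      using ick unfolding ick_axioms_def Let_def
      by (auto simp: Iff_def Top_def 1 2 3 impl_self)
  qed
next
  case (us \<phi> s)
  show ?case unfolding valid_in_def
  proof (intro allI impI)
    fix V :: "nat \<Rightarrow> _" assume V: "\<forall>n. V n \<in> A"
    have "\<forall>n. tset X le R V (s n) \<in> A" by (intro allI tset_A[OF gf V])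
    moreover have "(\<forall>n. tset X le R V (s n) \<in> A) \<longrightarrow> tset X le R (\<lambda>n. tset X le R V (s n)) \<phi> = X"
      using us.IH unfolding valid_in_def by (rule spec)
    ultimately show "tset X le R V (subst s \<phi>) = X" unfolding tset_subst by simp
  qed
next
  case (mp \<phi> \<psi>)
  show ?case unfolding valid_in_def
  proof (intro allI impI)
    fix V :: "nat \<Rightarrow> _" assume V: "\<forall>n. V n \<in> A"
    have h1: "tset X le R V \<phi> = X" using mp.IH(1)[unfolded valid_in_def, rule_format, of V, OF V[rule_format]] .
    have h2: "tset X le R V (Imp \<phi> \<psi>) = X" using mp.IH(2)[unfolded valid_in_def, rule_format, of V, OF V[rule_format]] .
    have "impl X le X (tset X le R V \<psi>) = X" using h1 h2 by simp
    then have "X \<subseteq> tset X le R V \<psi>"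
      using impl_X[where X=X and le=le and a=X and b="tset X le R V \<psi>", OF gfD(1)[OF gf] subset_refl] by simp
    then show "tset X le R V \<psi> = X" using tset_sub[OF gf V, of \<psi>] by blast
  qed
next
  case (cong_left \<phi> \<psi> \<chi>)
  then show ?case unfolding valid_Iff[OF gf] by simp
next
  case (cong_right \<phi> \<psi> \<chi>)
  then show ?case unfolding valid_Iff[OF gf] by simp
qed



definition pt :: "fm set \<Rightarrow> fm set \<Rightarrow> bool" where
  "pt \<Gamma> D \<longleftrightarrow> (\<forall>\<phi>. der \<Gamma> D \<phi> \<longrightarrow> \<phi> \<in> D) \<and> Bot \<notin> D \<and> (\<forall>a b. Or a b \<in> D \<longrightarrow> a \<in> D \<or> b \<in> D)"

lemma pt_closed: "pt \<Gamma> D \<Longrightarrow> der \<Gamma> D \<phi> \<Longrightarrow> \<phi> \<in> D"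
  unfolding pt_def by blast

lemma lindenbaum:
  assumes "\<not> der \<Gamma> S \<chi>"
  shows "\<exists>D. pt \<Gamma> D \<and> S \<subseteq> D \<and> \<chi> \<notin> D"
proof -
  define F where "F = {T. S \<subseteq> T \<and> \<not> der \<Gamma> T \<chi>}"
  have "\<forall>C\<in>chains F. \<exists>U\<in>F. \<forall>X\<in>C. X \<subseteq> U"
  proof
    fix C assume C: "C \<in> chains F"
    have "\<not> der \<Gamma> (S \<union> \<Union>C) \<chi>"
    proof
      assume d: "der \<Gamma> (S \<union> \<Union>C) \<chi>"
      obtain H where H: "finite H" "H \<subseteq> S \<union> \<Union>C" "der \<Gamma> H \<chi>" using der_compact[OF d] by blast
      show False
      proof (cases "C = {}")
        case True then have "H \<subseteq> S" using H by auto
        then show False using der_mono[OF H(3)] assms by blast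
      next
        case False
        have "finite (H - S)" "H - S \<subseteq> \<Union>C" using H by auto
        moreover have "subset.chain UNIV C" using C unfolding chains_def chain_subset_alt_def by auto
        ultimately obtain B where B: "B \<in> C" "H - S \<subseteq> B"
          using finite_subset_Union_chain[of "H - S" C UNIV] False by blast
        then have "B \<in> F" using C unfolding chains_def by auto
        then have "H \<subseteq> B" using B unfolding F_def by auto
        then have "der \<Gamma> B \<chi>" using der_mono[OF H(3)] by blast
        then show False using \<open>B \<in> F\<close> unfolding F_def by blast
      qed
    qed
    then show "\<exists>U\<in>F. \<forall>X\<in>C. X \<subseteq> U" unfolding F_def by (intro bexI[of _ "S \<union> \<Union>C"]) auto
  qed
  from Zorn_Lemma2[OF this] obtain M where M: "M \<in> F" "\<forall>X\<in>F. M \<subseteq> X \<longrightarrow> X = M" by blast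
  have nd: "\<not> der \<Gamma> M \<chi>" "S \<subseteq> M" using M(1) unfolding F_def by auto
  have ins: "der \<Gamma> (insert a M) \<chi>" if "a \<notin> M" for a
  proof (rule ccontr)
    assume "\<not> der \<Gamma> (insert a M) \<chi>"
    then have "insert a M \<in> F" using nd unfolding F_def by auto
    then show False using M(2) that by auto
  qed
  have cl: "\<phi> \<in> M" if "der \<Gamma> M \<phi>" for \<phi>
  proof (rule ccontr)
    assume "\<phi> \<notin> M"
    then have "der \<Gamma> M (Imp \<phi> \<chi>)" using ins[OF \<open>\<phi> \<notin> M\<close>] deduction by blast
    then show False using that nd der.dmp by blast
  qed
  have "Bot \<notin> M"
  proof
    assume "Bot \<in> M" then have "der \<Gamma> M \<chi>" using dmp2[OF axB] der.dhyp by blast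
    then show False using nd by blast
  qed
  moreover have "a \<in> M \<or> b \<in> M" if "Or a b \<in> M" for a b
  proof (rule ccontr)
    assume "\<not> (a \<in> M \<or> b \<in> M)"
    then have "der \<Gamma> M (Imp a \<chi>)" "der \<Gamma> M (Imp b \<chi>)" using ins[of a] ins[of b] deduction by blast+
    then have "der \<Gamma> M (Imp (Or a b) \<chi>)" by (meson axOE der.dmp der.dthm)
    then show False using that nd der.dmp der.dhyp by blast
  qed
  ultimately have "pt \<Gamma> M" using cl unfolding pt_def by blast
  then show ?thesis using nd der.dhyp by blast
qed

definition cX :: "fm set \<Rightarrow> fm set set" where "cX \<Gamma> = {D. pt \<Gamma> D}"
definition tr :: "fm set \<Rightarrow> fm \<Rightarrow> fm set set" where "tr \<Gamma> \<psi> = {D \<in> cX \<Gamma>. \<psi> \<in> D}"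
definition cA :: "fm set \<Rightarrow> fm set set set" where "cA \<Gamma> = range (tr \<Gamma>)"
definition cR :: "fm set \<Rightarrow> fm set set \<Rightarrow> fm set \<Rightarrow> fm set \<Rightarrow> bool" where
  "cR \<Gamma> a D E \<longleftrightarrow> D \<in> cX \<Gamma> \<and> E \<in> cX \<Gamma> \<and> (\<forall>\<psi> \<chi>. tr \<Gamma> \<psi> = a \<and> Cond \<psi> \<chi> \<in> D \<longrightarrow> \<chi> \<in> E)"

lemma pt_thm: "pt \<Gamma> D \<Longrightarrow> \<phi> \<in> ICK \<Gamma> \<Longrightarrow> \<phi> \<in> D"
  using pt_closed der.dthm by blast

lemma pt_mp: "pt \<Gamma> D \<Longrightarrow> Imp a b \<in> ICK \<Gamma> \<Longrightarrow> a \<in> D \<Longrightarrow> b \<in> D"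
  by (meson der.dhyp dmp2 pt_closed)

lemma tr_Bot: "tr \<Gamma> Bot = {}"
  unfolding tr_def cX_def pt_def by auto

lemma tr_Top: "tr \<Gamma> Top = cX \<Gamma>"
  unfolding tr_def cX_def using pt_thm[of \<Gamma> _ Top] axI unfolding Top_def by auto

lemma tr_And: "tr \<Gamma> (And a b) = tr \<Gamma> a \<inter> tr \<Gamma> b"
proof -
  have "And a b \<in> D \<longleftrightarrow> a \<in> D \<and> b \<in> D" if "pt \<Gamma> D" for D
    using that pt_mp[OF that axA1] pt_mp[OF that axA2]
    by (meson der.dhyp der.dmp dmp2 axAI pt_closed)
  then show ?thesis unfolding tr_def cX_def by auto
qed

lemma pt_and: "pt \<Gamma> D \<Longrightarrow> a \<in> D \<Longrightarrow> b \<in> D \<Longrightarrow> And a b \<in> D"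
  using tr_And[of \<Gamma> a b] unfolding tr_def cX_def by blast

lemma tr_Or: "tr \<Gamma> (Or a b) = tr \<Gamma> a \<union> tr \<Gamma> b"
proof -
  have "Or a b \<in> D \<longleftrightarrow> a \<in> D \<or> b \<in> D" if "pt \<Gamma> D" for D
    using that pt_mp[OF that axO1] pt_mp[OF that axO2] unfolding pt_def by blast
  then show ?thesis unfolding tr_def cX_def by auto
qed

lemma tr_Imp: "tr \<Gamma> (Imp a b) = impl (cX \<Gamma>) (\<subseteq>) (tr \<Gamma> a) (tr \<Gamma> b)"
proof -
  have "Imp a b \<in> D \<longleftrightarrow> (\<forall>E\<in>cX \<Gamma>. D \<subseteq> E \<and> a \<in> E \<longrightarrow> b \<in> E)" if "pt \<Gamma> D" for D
  proof
    assume ab: "Imp a b \<in> D" show "\<forall>E\<in>cX \<Gamma>. D \<subseteq> E \<and> a \<in> E \<longrightarrow> b \<in> E"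
    proof (intro ballI impI)
      fix E assume E: "E \<in> cX \<Gamma>" "D \<subseteq> E \<and> a \<in> E"
      then have "pt \<Gamma> E" "Imp a b \<in> E" "a \<in> E" using ab unfolding cX_def by auto
      then show "b \<in> E" using pt_closed der.dmp[OF der.dhyp der.dhyp] by metis
    qed
  next
    assume h: "\<forall>E\<in>cX \<Gamma>. D \<subseteq> E \<and> a \<in> E \<longrightarrow> b \<in> E"
    show "Imp a b \<in> D"
    proof (rule ccontr)
      assume "Imp a b \<notin> D"
      then have "\<not> der \<Gamma> (insert a D) b" using deduction[of \<Gamma> a D b] pt_closed[OF that, of "Imp a b"] by blast
      note lindenbaum[OF this]
      then obtain E where "pt \<Gamma> E" "insert a D \<subseteq> E" "b \<notin> E" by blast
      then show False using h unfolding cX_def by auto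
    qed
  qed
  then show ?thesis unfolding tr_def impl_def cX_def by auto
qed

lemma tr_eq_iff: "tr \<Gamma> a = tr \<Gamma> b \<Longrightarrow> Iff a b \<in> ICK \<Gamma>"
proof -
  have *: "Imp x y \<in> ICK \<Gamma>" if "tr \<Gamma> x \<subseteq> tr \<Gamma> y" for x y
  proof (rule ccontr)
    assume "Imp x y \<notin> ICK \<Gamma>"
    then have "\<not> der \<Gamma> {x} y" using derI by blast
    note lindenbaum[OF this]
      then obtain E where "pt \<Gamma> E" "x \<in> E" "y \<notin> E" by blast
    then show False using that unfolding tr_def cX_def by auto
  qed
  assume "tr \<Gamma> a = tr \<Gamma> b" then show ?thesis using * Iff_I by simp
qed

lemma cond_der: assumes p: "pt \<Gamma> D" and d: "der \<Gamma> {\<chi>. Cond a \<chi> \<in> D} b" shows "Cond a b \<in> D"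
  using d
proof (induction rule: der.induct)
  case (dthm \<phi>) then show ?case using cond_nec pt_thm[OF p] by blast
next
  case (dhyp \<phi>) then show ?case by simp
next
  case (dmp \<phi> \<psi>)
  then have "And (Cond a \<phi>) (Cond a (Imp \<phi> \<psi>)) \<in> D"
    using pt_and[OF p] by blast
  then have "Cond a (And \<phi> (Imp \<phi> \<psi>)) \<in> D" using pt_mp[OF p Iff_D2[OF axC1]] by blast
  moreover have "Imp (And \<phi> (Imp \<phi> \<psi>)) \<psi> \<in> ICK \<Gamma>"
  proof (rule derI)
    have h: "der \<Gamma> {And \<phi> (Imp \<phi> \<psi>)} (And \<phi> (Imp \<phi> \<psi>))" by (rule der.dhyp) simp
    show "der \<Gamma> {And \<phi> (Imp \<phi> \<psi>)} \<psi>" by (rule der.dmp[OF dmp2[OF axA1 h] dmp2[OF axA2 h]])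
  qed
  ultimately show ?case using pt_mp[OF p cond_mono] by blast
qed

lemma tr_Cond: "tr \<Gamma> (Cond a b) = cimpl (cX \<Gamma>) (cR \<Gamma>) (tr \<Gamma> a) (tr \<Gamma> b)"
proof -
  have "Cond a b \<in> D \<longleftrightarrow> (\<forall>E. cR \<Gamma> (tr \<Gamma> a) D E \<longrightarrow> E \<in> tr \<Gamma> b)" if "pt \<Gamma> D" for D
  proof
    assume "Cond a b \<in> D" then show "\<forall>E. cR \<Gamma> (tr \<Gamma> a) D E \<longrightarrow> E \<in> tr \<Gamma> b"
      unfolding cR_def tr_def by blast
  next
    assume h: "\<forall>E. cR \<Gamma> (tr \<Gamma> a) D E \<longrightarrow> E \<in> tr \<Gamma> b"
    show "Cond a b \<in> D"
    proof (rule ccontr)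
      assume "Cond a b \<notin> D"
      then have "\<not> der \<Gamma> {\<chi>. Cond a \<chi> \<in> D} b" using cond_der that by blast
      note lindenbaum[OF this]
      then obtain E where E: "pt \<Gamma> E" "{\<chi>. Cond a \<chi> \<in> D} \<subseteq> E" "b \<notin> E" by blast
      have "cR \<Gamma> (tr \<Gamma> a) D E"
        unfolding cR_def
      proof (intro conjI allI impI)
        fix \<psi> \<chi> assume "tr \<Gamma> \<psi> = tr \<Gamma> a \<and> Cond \<psi> \<chi> \<in> D"
        then have "Iff (Cond \<psi> \<chi>) (Cond a \<chi>) \<in> ICK \<Gamma>" "Cond \<psi> \<chi> \<in> D"
          using tr_eq_iff ICK.cong_left by blast+
        then have "Cond a \<chi> \<in> D" using pt_mp[OF that Iff_D1] by blast
        then show "\<chi> \<in> E" using E by auto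
      qed (use that E in \<open>auto simp: cX_def\<close>)
      then show False using h E unfolding tr_def by auto
    qed
  qed
  then show ?thesis unfolding tr_def cimpl_def cX_def by auto
qed

lemma truth: "(\<And>n. V n = tr \<Gamma> (s n)) \<Longrightarrow> tset (cX \<Gamma>) (\<subseteq>) (cR \<Gamma>) V \<phi> = tr \<Gamma> (subst s \<phi>)"
  by (induction \<phi>) (auto simp: tr_Bot tr_And tr_Or tr_Imp tr_Cond)

lemma subst_Var: "subst Var \<phi> = \<phi>"
  by (induction \<phi>) auto

lemma canon_frame: "general_frame (cX \<Gamma>) (\<subseteq>) (cR \<Gamma>) (cA \<Gamma>)"
  unfolding general_frame_def
proof (intro conjI)
  show "\<forall>a\<in>cA \<Gamma>. upset (cX \<Gamma>) (\<subseteq>) a" unfolding cA_def upset_def tr_def by auto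
  show "cX \<Gamma> \<in> cA \<Gamma>" unfolding cA_def using tr_Top by (metis rangeI)
  show "{} \<in> cA \<Gamma>" unfolding cA_def using tr_Bot by (metis rangeI)
  show "\<forall>a\<in>cA \<Gamma>. \<forall>b\<in>cA \<Gamma>. a \<inter> b \<in> cA \<Gamma> \<and> a \<union> b \<in> cA \<Gamma> \<and> impl (cX \<Gamma>) (\<subseteq>) a b \<in> cA \<Gamma> \<and> cimpl (cX \<Gamma>) (cR \<Gamma>) a b \<in> cA \<Gamma>"
    unfolding cA_def by (auto simp flip: tr_And tr_Or tr_Imp tr_Cond)
  show "\<forall>a\<in>cA \<Gamma>. \<forall>x y. cR \<Gamma> a x y \<longrightarrow> x \<in> cX \<Gamma> \<and> y \<in> cX \<Gamma>" unfolding cR_def by auto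
  show "\<forall>a\<in>cA \<Gamma>. \<forall>x\<in>cX \<Gamma>. \<forall>y\<in>cX \<Gamma>. \<forall>z\<in>cX \<Gamma>. x \<subseteq> y \<and> cR \<Gamma> a y z \<longrightarrow> (\<exists>w\<in>cX \<Gamma>. cR \<Gamma> a x w \<and> w \<subseteq> z)"
    unfolding cR_def by blast
qed auto

lemma completeness:
  assumes "\<forall>(X :: fm set set) le R A. general_frame X le R A \<and> (\<forall>\<gamma>\<in>\<Gamma>. valid_in X le R A \<gamma>) \<longrightarrow> valid_in X le R A \<phi>"
  shows "\<phi> \<in> ICK \<Gamma>"
proof -
  have "valid_in (cX \<Gamma>) (\<subseteq>) (cR \<Gamma>) (cA \<Gamma>) \<gamma>" if "\<gamma> \<in> \<Gamma>" for \<gamma>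
    unfolding valid_in_def
  proof (intro allI impI)
    fix V :: "nat \<Rightarrow> fm set set" assume "\<forall>n. V n \<in> cA \<Gamma>"
    then have "\<forall>n. \<exists>\<psi>. V n = tr \<Gamma> \<psi>" unfolding cA_def by auto
    then obtain s where "\<And>n. V n = tr \<Gamma> (s n)" by metis
    then have "tset (cX \<Gamma>) (\<subseteq>) (cR \<Gamma>) V \<gamma> = tr \<Gamma> (subst s \<gamma>)" by (rule truth)
    moreover have "subst s \<gamma> \<in> ICK \<Gamma>" using that ICK.gamma ICK.us by blast
    ultimately show "tset (cX \<Gamma>) (\<subseteq>) (cR \<Gamma>) V \<gamma> = cX \<Gamma>"
      unfolding tr_def cX_def using pt_thm by auto
  qed
  then have "valid_in (cX \<Gamma>) (\<subseteq>) (cR \<Gamma>) (cA \<Gamma>) \<phi>" using assms canon_frame by blast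
  then have "tset (cX \<Gamma>) (\<subseteq>) (cR \<Gamma>) (\<lambda>n. tr \<Gamma> (Var n)) \<phi> = cX \<Gamma>"
    unfolding valid_in_def cA_def by auto
  then have "tr \<Gamma> \<phi> = cX \<Gamma>" using truth[of "\<lambda>n. tr \<Gamma> (Var n)" \<Gamma> Var \<phi>] subst_Var by simp
  show ?thesis
  proof (rule ccontr)
    assume "\<phi> \<notin> ICK \<Gamma>"
    then have "\<not> der \<Gamma> {} \<phi>" using der_empty by blast
    note lindenbaum[OF this]
      then obtain E where "pt \<Gamma> E" "\<phi> \<notin> E" by blast
    then show False using \<open>tr \<Gamma> \<phi> = cX \<Gamma>\<close> unfolding tr_def cX_def by auto
  qed
qed


theorem theorem4p25:
  fixes \<Gamma> :: "fm set" and \<phi> :: fm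
  shows "(\<phi> \<in> ICK \<Gamma> \<longrightarrow>
           (\<forall>(X :: 'w set) le R A. general_frame X le R A \<and> (\<forall>\<gamma>\<in>\<Gamma>. valid_in X le R A \<gamma>)
              \<longrightarrow> valid_in X le R A \<phi>))
       \<and> ((\<forall>(X :: fm set set) le R A. general_frame X le R A \<and> (\<forall>\<gamma>\<in>\<Gamma>. valid_in X le R A \<gamma>)
              \<longrightarrow> valid_in X le R A \<phi>)
          \<longrightarrow> \<phi> \<in> ICK \<Gamma>)"
  using soundness completeness by blast

end
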